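(* For every integer $\ell\ge 2$, no witness of $D_{3\ell}(H_\ell)$ has size less than $|H_\ell|=6\ell-2$.
   Context: $\Lambda_i$ denotes the poset with $i$ minimal elements and one further element above all of them. $H_\ell$ is the poset whose connected components are $\ell$ copies of $\Lambda_2$ and one copy of $\Lambda_{3(\ell-1)}$. A downset is a downward-closed subset; $D_n(Q)$ is the set of downsets of $Q$ of size $n$ up to isomorphism. $Q$ is a witness of a set $\Gamma_n$ of unlabelled posets of size $n$ if $D_n(Q)=\Gamma_n$. *)

theory Defs
  imports Main
begin

definition finite_poset :: "'a set \<Rightarrow> ('a \<Rightarrow> 'a \<Rightarrow> bool) \<Rightarrow> bool" where
  "finite_poset A le \<longleftrightarrow> finite A \<and> (\<forall>x\<in>A. le x x)
     \<and> (\<forall>x\<in>A. \<forall>y\<in>A. le x y \<and> le y x \<longrightarrow> x = y)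
     \<and> (\<forall>x\<in>A. \<forall>y\<in>A. \<forall>z\<in>A. le x y \<and> le y z \<longrightarrow> le x z)"

definition is_downset :: "'a set \<Rightarrow> ('a \<Rightarrow> 'a \<Rightarrow> bool) \<Rightarrow> 'a set \<Rightarrow> bool" where
  "is_downset A le S \<longleftrightarrow> S \<subseteq> A \<and> (\<forall>x\<in>S. \<forall>y\<in>A. le y x \<longrightarrow> y \<in> S)"

definition poset_iso :: "'a set \<Rightarrow> ('a \<Rightarrow> 'a \<Rightarrow> bool) \<Rightarrow> 'b set \<Rightarrow> ('b \<Rightarrow> 'b \<Rightarrow> bool) \<Rightarrow> bool" where
  "poset_iso A le B le' \<longleftrightarrow>
     (\<exists>f. bij_betw f A B \<and> (\<forall>x\<in>A. \<forall>y\<in>A. le x y \<longleftrightarrow> le' (f x) (f y)))"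

definition downsets_sub :: "nat \<Rightarrow> 'a set \<Rightarrow> ('a \<Rightarrow> 'a \<Rightarrow> bool) \<Rightarrow> 'b set \<Rightarrow> ('b \<Rightarrow> 'b \<Rightarrow> bool) \<Rightarrow> bool" where
  "downsets_sub n A le B le' \<longleftrightarrow>
     (\<forall>S. is_downset A le S \<and> card S = n \<longrightarrow>
        (\<exists>T. is_downset B le' T \<and> card T = n \<and> poset_iso S le T le'))"

text \<open>D_n(A) = D_n(B) as sets of unlabelled posets.\<close>
definition same_downsets :: "nat \<Rightarrow> 'a set \<Rightarrow> ('a \<Rightarrow> 'a \<Rightarrow> bool) \<Rightarrow> 'b set \<Rightarrow> ('b \<Rightarrow> 'b \<Rightarrow> bool) \<Rightarrow> bool" where
  "same_downsets n A le B le' \<longleftrightarrow> downsets_sub n A le B le' \<and> downsets_sub n B le' A le"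

text \<open>The poset H_l on nat \<times> nat: components i < l are copies of Lambda_2
(minimal elements (i,0),(i,1), top (i,2)); component l is Lambda_{3(l-1)}
(minimal elements (l,j), j < 3(l-1), top (l,3(l-1))).\<close>
definition H_top :: "nat \<Rightarrow> nat \<Rightarrow> nat" where
  "H_top l i = (if i < l then 2 else 3 * (l - 1))"

definition H_carrier :: "nat \<Rightarrow> (nat \<times> nat) set" where
  "H_carrier l = {(i, j). i < l \<and> j \<le> 2} \<union> {(i, j). i = l \<and> j \<le> 3 * (l - 1)}"

definition H_le :: "nat \<Rightarrow> nat \<times> nat \<Rightarrow> nat \<times> nat \<Rightarrow> bool" where
  "H_le l x y \<longleftrightarrow> x = y \<or> (fst x = fst y \<and> snd y = H_top l (fst y))"

end

theory Submission
  imports Defs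
begin

definition bc :: "'a set \<Rightarrow> ('a \<Rightarrow> 'a \<Rightarrow> bool) \<Rightarrow> 'a \<Rightarrow> nat" where
  "bc X R x = card {y\<in>X. R y x}"

lemma H_carrier_alt: "H_carrier l = {(i,j). i \<le> l \<and> j \<le> H_top l i}"
  unfolding H_carrier_def H_top_def by (auto split: if_splits)

lemma card_H: "l \<ge> 1 \<Longrightarrow> card (H_carrier l) = 6 * l - 2"
proof -
  assume l: "l \<ge> 1"
  have e: "H_carrier l = ({..<l} \<times> {..2::nat}) \<union> ({l} \<times> {..3*(l-1)})"
    unfolding H_carrier_def by auto
  have "card (H_carrier l) = card ({..<l} \<times> {..2::nat}) + card ({l} \<times> {..3*(l-1)})"
    unfolding e by (rule card_Un_disjoint) auto
  also have "\<dots> = 3*l + (3*(l-1)+1)" by (simp add: card_cartesian_product)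
  finally show ?thesis using l by simp
qed

lemma bc_iso:
  assumes "bij_betw f X Y" "\<forall>x\<in>X. \<forall>y\<in>X. R x y \<longleftrightarrow> R' (f x) (f y)" "x \<in> X"
  shows "bc Y R' (f x) = bc X R x"
proof -
  have inj: "inj_on f {y\<in>X. R y x}" using assms(1) unfolding bij_betw_def by (auto intro: inj_on_subset)
  have "f ` {y\<in>X. R y x} = {y\<in>Y. R' y (f x)}"
  proof
    show "f ` {y\<in>X. R y x} \<subseteq> {y\<in>Y. R' y (f x)}" using assms bij_betwE by fastforce
    show "{y\<in>Y. R' y (f x)} \<subseteq> f ` {y\<in>X. R y x}"
    proof
      fix y assume y: "y \<in> {y\<in>Y. R' y (f x)}"
      then obtain z where "z \<in> X" "y = f z" using assms(1) unfolding bij_betw_def by auto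
      then show "y \<in> f ` {y\<in>X. R y x}" using y assms by auto
    qed
  qed
  then show ?thesis unfolding bc_def using card_image[OF inj] by simp
qed

lemma bc_down:
  assumes "is_downset Q R S" "x \<in> S"
  shows "bc S R x = bc Q R x"
proof -
  have "{y\<in>S. R y x} = {y\<in>Q. R y x}" using assms unfolding is_downset_def by auto
  then show ?thesis unfolding bc_def by simp
qed

lemma bcH:
  assumes "y \<in> H_carrier l"
  shows "bc (H_carrier l) (H_le l) y = (if snd y = H_top l (fst y) then H_top l (fst y) + 1 else 1)"
proof -
  obtain i j where y: "y = (i,j)" by (cases y)
  have ij: "i \<le> l" "j \<le> H_top l i" using assms y H_carrier_alt by auto
  show ?thesis
  proof (cases "j = H_top l i")
    case True
    have "{z\<in>H_carrier l. H_le l z y} = {i} \<times> {..H_top l i}"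
      using True ij unfolding y H_carrier_alt H_le_def by auto
    then show ?thesis unfolding bc_def using True y by (simp add: card_cartesian_product)
  next
    case False
    have "{z\<in>H_carrier l. H_le l z y} = {y}"
      using False ij assms unfolding y H_le_def by auto
    then show ?thesis unfolding bc_def using False y by simp
  qed
qed

lemma H_two_tops:
  assumes "l \<ge> 2" "is_downset (H_carrier l) (H_le l) T" "card T = 3*l"
    "(l, 3*(l-1)) \<in> T" "(i,2) \<in> T" "i < l"
  shows False
proof -
  have "({l} \<times> {..3*(l-1)}) \<union> ({i} \<times> {..2::nat}) \<subseteq> T"
  proof
    fix z assume z: "z \<in> ({l} \<times> {..3*(l-1)}) \<union> ({i} \<times> {..2::nat})"
    then have "z \<in> H_carrier l" using assms(6) unfolding H_carrier_def by auto
    moreover have "H_le l z (l, 3*(l-1)) \<or> H_le l z (i,2)"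
      using z assms(6) unfolding H_le_def H_top_def by auto
    ultimately show "z \<in> T" using assms(2,4,5) unfolding is_downset_def by blast
  qed
  moreover have "finite T" using assms(3,1) card.infinite by fastforce
  ultimately have "card (({l} \<times> {..3*(l-1)}) \<union> ({i} \<times> {..2::nat})) \<le> 3*l"
    using assms(3) card_mono by metis
  moreover have "card (({l} \<times> {..3*(l-1)}) \<union> ({i} \<times> {..2::nat})) = (3*(l-1)+1) + 3"
    using assms(6) by (subst card_Un_disjoint) (auto simp: card_cartesian_product)
  ultimately show False using assms(1) by simp
qed

lemma down_is_downset:
  assumes "finite_poset Q le" "a \<in> Q"
  shows "is_downset Q le {y\<in>Q. le y a}"
  using assms unfolding is_downset_def finite_poset_def by blast

lemma bcH_big:
  assumes "l \<ge> 2" "y \<in> H_carrier l" "bc (H_carrier l) (H_le l) y = 3*l-2"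
  shows "y = (l, 3*(l-1))"
proof -
  obtain i j where y: "y = (i,j)" by (cases y)
  have "i \<le> l" using assms(2) y H_carrier_alt by auto
  then show ?thesis using bcH[OF assms(2)] assms(1,3) y unfolding H_top_def
    by (auto split: if_splits)
qed

lemma bcH_small:
  assumes "l \<ge> 2" "y \<in> H_carrier l" "bc (H_carrier l) (H_le l) y = 3"
  shows "fst y < l \<and> snd y = 2"
proof -
  obtain i j where y: "y = (i,j)" by (cases y)
  have "i \<le> l" using assms(2) y H_carrier_alt by auto
  then show ?thesis using bcH[OF assms(2)] assms(1,3) y unfolding H_top_def
    by (auto split: if_splits)
qed

lemma Un_downset: "is_downset Q le A \<Longrightarrow> is_downset Q le B \<Longrightarrow> is_downset Q le (A \<union> B)"
  unfolding is_downset_def by blast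

theorem mainTheorem8:
  fixes l :: nat and Q :: "'a set" and le :: "'a \<Rightarrow> 'a \<Rightarrow> bool"
  assumes "l \<ge> 2"
    and "finite_poset Q le"
    and "same_downsets (3 * l) Q le (H_carrier l) (H_le l)"
  shows "card (H_carrier l) = 6 * l - 2 \<and> card Q \<ge> card (H_carrier l)"
proof -
  note l = assms(1)
  have finQ: "finite Q" using assms(2) unfolding finite_poset_def by simp
  have HQ: "downsets_sub (3*l) (H_carrier l) (H_le l) Q le"
   and QH: "downsets_sub (3*l) Q le (H_carrier l) (H_le l)"
    using assms(3) unfolding same_downsets_def by auto
  define bq where "bq x = bc Q le x" for x
  define T1 where "T1 = {..<l} \<times> {..2::nat}"
  define T2 where "T2 = ({l} \<times> {..3*(l-1)}) \<union> {(0,0),(0,1)}"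
  have T1d: "is_downset (H_carrier l) (H_le l) T1"
    unfolding T1_def is_downset_def H_carrier_def H_le_def by auto
  have T1c: "card T1 = 3*l" unfolding T1_def by (simp add: card_cartesian_product)
  have T2d: "is_downset (H_carrier l) (H_le l) T2"
    using l unfolding T2_def is_downset_def H_carrier_def H_le_def H_top_def by auto
  have T2c: "card T2 = 3*l"
  proof -
    have "card T2 = card ({l} \<times> {..3*(l-1)}) + card {(0::nat,0::nat),(0,1)}"
      unfolding T2_def using l by (subst card_Un_disjoint) auto
    then show ?thesis using l by (simp add: card_cartesian_product)
  qed
  obtain S1 where S1d: "is_downset Q le S1" and S1c: "card S1 = 3*l"
    and "poset_iso T1 (H_le l) S1 le"
    using HQ T1d T1c unfolding downsets_sub_def by blast
  then obtain f where fb: "bij_betw f T1 S1"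
    and fo: "\<forall>x\<in>T1. \<forall>y\<in>T1. H_le l x y \<longleftrightarrow> le (f x) (f y)"
    unfolding poset_iso_def by blast
  obtain S2 where S2d: "is_downset Q le S2" and S2c: "card S2 = 3*l"
    and "poset_iso T2 (H_le l) S2 le"
    using HQ T2d T2c unfolding downsets_sub_def by blast
  then obtain g where gb: "bij_betw g T2 S2"
    and go: "\<forall>x\<in>T2. \<forall>y\<in>T2. H_le l x y \<longleftrightarrow> le (g x) (g y)"
    unfolding poset_iso_def by blast
  have T1H: "T1 \<subseteq> H_carrier l" and T2H: "T2 \<subseteq> H_carrier l"
    using T1d T2d unfolding is_downset_def by auto
  have bq1: "bq (f z) = bc (H_carrier l) (H_le l) z" if "z \<in> T1" for z
  proof -
    have "f z \<in> S1" using fb that bij_betwE by blast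
    then have "bq (f z) = bc S1 le (f z)" unfolding bq_def using bc_down[OF S1d] by simp
    also have "\<dots> = bc T1 (H_le l) z" using bc_iso[OF fb fo that] .
    also have "\<dots> = bc (H_carrier l) (H_le l) z" using bc_down[OF T1d that] .
    finally show ?thesis .
  qed
  have bq2: "bq (g z) = bc (H_carrier l) (H_le l) z" if "z \<in> T2" for z
  proof -
    have "g z \<in> S2" using gb that bij_betwE by blast
    then have "bq (g z) = bc S2 le (g z)" unfolding bq_def using bc_down[OF S2d] by simp
    also have "\<dots> = bc T2 (H_le l) z" using bc_iso[OF gb go that] .
    also have "\<dots> = bc (H_carrier l) (H_le l) z" using bc_down[OF T2d that] .
    finally show ?thesis .
  qed
  have bqT1: "bq (f z) = (if snd z = 2 then 3 else 1)" if "z \<in> T1" for z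
  proof -
    have zH: "z \<in> H_carrier l" using T1H that by auto
    show ?thesis using bq1[OF that] bcH[OF zH] that unfolding T1_def H_top_def by auto
  qed
  have bqT2: "bq (g z) = (if z = (l, 3*(l-1)) then 3*l-2 else 1)" if "z \<in> T2" for z
  proof -
    have zH: "z \<in> H_carrier l" using T2H that by auto
    show ?thesis using bq2[OF that] bcH[OF zH] that l unfolding T2_def H_top_def by auto
  qed
  define t where "t = g (l, 3*(l-1))"
  define p where "p = g (0,0)"
  define q where "q = g (0,1)"
  have tT2: "(l, 3*(l-1)) \<in> T2" unfolding T2_def by auto
  have t2: "t \<in> S2" unfolding t_def using gb tT2 bij_betwE by blast
  have bqt: "bq t = 3*l-2" unfolding t_def using bqT2[OF tT2] by simp
  have p2: "p \<in> S2" unfolding p_def using gb bij_betwE unfolding T2_def by blast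
  have bqp: "bq p = 1" unfolding p_def using bqT2 l unfolding T2_def by auto
  have pt: "\<not> le p t" unfolding p_def t_def using go tT2 l unfolding T2_def H_le_def H_top_def
    by auto
  have S2a: "\<forall>x\<in>S2. x \<notin> {p,q} \<longrightarrow> le x t"
  proof (intro ballI impI)
    fix x assume x: "x \<in> S2" "x \<notin> {p,q}"
    then obtain z where z: "z \<in> T2" "x = g z" using gb unfolding bij_betw_def by auto
    then have "z \<in> {l} \<times> {..3*(l-1)}" using x unfolding p_def q_def T2_def by auto
    then have "H_le l z (l, 3*(l-1))" unfolding H_le_def H_top_def by auto
    then show "le x t" using go z tT2 unfolding t_def by blast
  qed
  have S2b: "\<forall>x\<in>S2. bq x = 1 \<or> x = t"
    using gb bqT2 unfolding bij_betw_def t_def by auto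
  have S1a: "\<forall>x\<in>S1. bq x = 1 \<or> bq x = 3"
    using fb bqT1 unfolding bij_betw_def by auto
  have S1b: "\<forall>x\<in>S1. bq x = 1 \<longrightarrow> (\<exists>u\<in>S1. bq u = 3 \<and> le x u)"
  proof (intro ballI impI)
    fix x assume x: "x \<in> S1" "bq x = 1"
    then obtain z where z: "z \<in> T1" "x = f z" using fb unfolding bij_betw_def by auto
    obtain i j where ij: "z = (i,j)" by (cases z)
    have zz: "(i,2) \<in> T1" using z ij unfolding T1_def by auto
    have "H_le l z (i,2)" using ij z unfolding T1_def H_le_def H_top_def by auto
    then have "le x (f (i,2))" using fo z zz by blast
    moreover have "f (i,2) \<in> S1" using fb zz bij_betwE by blast
    moreover have "bq (f (i,2)) = 3" using bqT1[OF zz] by simp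
    ultimately show "\<exists>u\<in>S1. bq u = 3 \<and> le x u" by blast
  qed
  have inter: "S1 \<inter> S2 \<subseteq> {p,q}"
  proof
    fix x assume x: "x \<in> S1 \<inter> S2"
    show "x \<in> {p,q}"
    proof (rule ccontr)
      assume npq: "x \<notin> {p,q}"
      have Q1: "S1 \<subseteq> Q" and Q2: "S2 \<subseteq> Q" using S1d S2d unfolding is_downset_def by auto
      have lxt: "le x t" using S2a x npq by blast
      have tS1: "t \<notin> S1" using S1a bqt l by fastforce
      have "x \<noteq> t" using x tS1 by blast
      then have bqx: "bq x = 1" using S2b x by blast
      obtain u where u: "u \<in> S1" "bq u = 3" "le x u" using S1b x bqx by blast
      have uQ: "u \<in> Q" and tQ: "t \<in> Q" and xQ: "x \<in> Q" using u t2 x Q1 Q2 by auto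
      define Dt where "Dt = {y\<in>Q. le y t}"
      define Du where "Du = {y\<in>Q. le y u}"
      have Dtd: "is_downset Q le Dt" unfolding Dt_def using down_is_downset[OF assms(2) tQ] .
      have Dud: "is_downset Q le Du" unfolding Du_def using down_is_downset[OF assms(2) uQ] .
      have cDt: "card Dt = 3*l-2" using bqt unfolding bq_def bc_def Dt_def .
      have cDu: "card Du = 3" using u(2) unfolding bq_def bc_def Du_def .
      have fDt: "finite Dt" and fDu: "finite Du" unfolding Dt_def Du_def using finQ by auto
      have uDt: "u \<notin> Dt"
      proof
        assume "u \<in> Dt"
        then have "le u t" unfolding Dt_def by auto
        then have "u \<in> S2" using S2d t2 uQ unfolding is_downset_def by blast
        then show False using S2b u(2) bqt l by fastforce
      qed
      have uDu: "u \<in> Du" unfolding Du_def using uQ assms(2) unfolding finite_poset_def by blast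
      define I where "I = Dt \<inter> Du"
      have xI: "x \<in> I" unfolding I_def Dt_def Du_def using xQ lxt u by auto
      have IDu: "I \<subseteq> Du - {u}" unfolding I_def using uDt by auto
      have cI2: "card I \<le> 2" using card_mono[OF _ IDu] fDu cDu uDu by simp
      have cI1: "card I \<ge> 1" using xI fDt I_def
        by (metis One_nat_def Suc_leI card_gt_0_iff empty_iff finite_Int)
      have cU: "card (Dt \<union> Du) + card I = card Dt + card Du"
        unfolding I_def using card_Un_Int[OF fDt fDu] by simp
      obtain D where Dd: "is_downset Q le D" and Dc: "card D = 3*l" and tD: "t \<in> D" and uD: "u \<in> D"
      proof (cases "card I = 1")
        case True
        show ?thesis
        proof (rule that[of "Dt \<union> Du"])
          show "is_downset Q le (Dt \<union> Du)" using Un_downset[OF Dtd Dud] .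
          show "card (Dt \<union> Du) = 3*l" using cU cDt cDu True l by simp
          show "t \<in> Dt \<union> Du" unfolding Dt_def using tQ assms(2) unfolding finite_poset_def by blast
          show "u \<in> Dt \<union> Du" using uDu by blast
        qed
      next
        case False
        then have cI: "card I = 2" using cI1 cI2 by simp
        have pQ: "p \<in> Q" using p2 Q2 by auto
        define Dp where "Dp = {y\<in>Q. le y p}"
        have Dpd: "is_downset Q le Dp" unfolding Dp_def using down_is_downset[OF assms(2) pQ] .
        have "card Dp = 1" using bqp unfolding bq_def bc_def Dp_def .
        moreover have "p \<in> Dp" unfolding Dp_def using pQ assms(2) unfolding finite_poset_def by blast
        ultimately have Dp1: "Dp = {p}" by (metis card_1_singletonE singletonD)
        have pDt: "p \<notin> Dt" using pt unfolding Dt_def by auto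
        have pDu: "p \<notin> Du"
        proof
          assume pDu: "p \<in> Du"
          have sub: "insert u (insert p I) \<subseteq> Du" using pDu uDu unfolding I_def by auto
          have "u \<noteq> p" using u(2) bqp by auto
          have "card (insert u (insert p I)) = 4"
            using cI pDt uDt fDt \<open>u \<noteq> p\<close> unfolding I_def by (simp add: card_insert_if)
          then show False using card_mono[OF fDu sub] cDu by simp
        qed
        show ?thesis
        proof (rule that[of "Dt \<union> Du \<union> Dp"])
          show "is_downset Q le (Dt \<union> Du \<union> Dp)" using Un_downset[OF Un_downset[OF Dtd Dud] Dpd] .
          have "card (Dt \<union> Du \<union> Dp) = card (insert p (Dt \<union> Du))" unfolding Dp1 by simp
          also have "\<dots> = card (Dt \<union> Du) + 1" using pDt pDu fDt fDu by simp
          finally show "card (Dt \<union> Du \<union> Dp) = 3*l" using cU cDt cDu cI l by simp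
          show "t \<in> Dt \<union> Du \<union> Dp" unfolding Dt_def using tQ assms(2) unfolding finite_poset_def by blast
          show "u \<in> Dt \<union> Du \<union> Dp" using uDu by blast
        qed
      qed
      obtain T where Td: "is_downset (H_carrier l) (H_le l) T" and Tc: "card T = 3*l"
        and "poset_iso D le T (H_le l)"
        using QH Dd Dc unfolding downsets_sub_def by blast
      then obtain h where hb: "bij_betw h D T"
        and ho: "\<forall>x\<in>D. \<forall>y\<in>D. le x y \<longleftrightarrow> H_le l (h x) (h y)"
        unfolding poset_iso_def by blast
      have htT: "h t \<in> T" and huT: "h u \<in> T" using hb tD uD bij_betwE by blast+
      have TH: "T \<subseteq> H_carrier l" using Td unfolding is_downset_def by auto
      have "bc (H_carrier l) (H_le l) (h t) = bc T (H_le l) (h t)" using bc_down[OF Td htT] by simp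
      also have "\<dots> = bc D le t" using bc_iso[OF hb ho tD] .
      also have "\<dots> = 3*l-2" using bc_down[OF Dd tD] bqt unfolding bq_def by simp
      finally have ht: "h t = (l, 3*(l-1))" using bcH_big[OF l] htT TH by blast
      have "bc (H_carrier l) (H_le l) (h u) = bc T (H_le l) (h u)" using bc_down[OF Td huT] by simp
      also have "\<dots> = bc D le u" using bc_iso[OF hb ho uD] .
      also have "\<dots> = 3" using bc_down[OF Dd uD] u(2) unfolding bq_def by simp
      finally have "fst (h u) < l \<and> snd (h u) = 2" using bcH_small[OF l] huT TH by blast
      then show False using ht using H_two_tops[OF l Td Tc, of "fst (h u)"] htT huT
        by (metis prod.collapse)
    qed
  qed
  have "card (S1 \<union> S2) + card (S1 \<inter> S2) = card S1 + card S2"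
  proof -
    have "finite S1" "finite S2" using finQ S1d S2d unfolding is_downset_def by (auto intro: finite_subset)
    then show ?thesis using card_Un_Int[of S1 S2] by simp
  qed
  moreover have "card (S1 \<inter> S2) \<le> 2"
  proof -
    have "card (S1 \<inter> S2) \<le> card {p,q}" using card_mono[OF _ inter] by simp
    also have "\<dots> \<le> 2" by (simp add: card_insert_if)
    finally show ?thesis .
  qed
  moreover have "card (S1 \<union> S2) \<le> card Q"
    using finQ S1d S2d unfolding is_downset_def by (intro card_mono) auto
  ultimately show ?thesis using card_H[of l] l S1c S2c by simp
qed

end
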